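(* Let $x,p\in\mathbb{R}^d$ with $\lVert x\rVert=1$ and $p\neq 0$, and let $\delta\in\mathbb{R}$ with $\lVert p\rVert\ge\delta$. Put $\hat p=p/\lVert p\rVert$, and assume $p+x\neq 0$ and $\delta^2+2\delta\hat p^Tx+1>0$. Let $y=\frac{p+x}{\lVert p+x\rVert}$. Then $$\lVert\hat p-y\rVert\le\sqrt{2-2\,\frac{\delta+\hat p^Tx}{\sqrt{\delta^2+2\delta\hat p^Tx+1}}}.$$
   Context: $\lVert\cdot\rVert$ denotes the Euclidean norm on $\mathbb{R}^d$. *)

theory Defs
  imports "HOL-Analysis.Analysis"
begin

end

theory Submission
  imports Defs
begin

lemma mono_aux:
  fixes u v k :: real
  assumes "v \<le> u" "k \<ge> 0" "u^2 + k > 0" "v^2 + k > 0"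
  shows "v / sqrt (v^2 + k) \<le> u / sqrt (u^2 + k)"
proof -
  have su: "sqrt (u^2+k) > 0" and sv: "sqrt (v^2+k) > 0" using assms by auto
  have ssu: "sqrt (u^2+k)^2 = u^2+k" and ssv: "sqrt (v^2+k)^2 = v^2+k" using assms by auto
  have key: "v * sqrt (u^2+k) \<le> u * sqrt (v^2+k)"
  proof (cases "v \<le> 0 \<and> 0 \<le> u")
    case True
    have "v * sqrt (u^2+k) \<le> 0" using True su by (simp add: mult_nonpos_nonneg)
    moreover have "0 \<le> u * sqrt (v^2+k)" using True sv by simp
    ultimately show ?thesis by linarith
  next
    case False
    then have "(0 < v \<and> 0 < u) \<or> (v < 0 \<and> u < 0)" using assms(1) by linarith
    then show ?thesis
    proof
      assume h: "0 < v \<and> 0 < u"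
      have "(v * sqrt (u^2+k))^2 \<le> (u * sqrt (v^2+k))^2"
        unfolding power_mult_distrib ssu ssv using assms h
        using power_mono[of v u 2] mult_left_mono[of "v^2" "u^2" k]
        by (simp add: algebra_simps)
      moreover have "0 \<le> u * sqrt (v^2+k)" using h sv by simp
      ultimately show ?thesis by (rule power2_le_imp_le)
    next
      assume h: "v < 0 \<and> u < 0"
      have "(u * sqrt (v^2+k))^2 \<le> (v * sqrt (u^2+k))^2"
      proof -
        have "u^2 \<le> v^2" using h assms(1) using power_mono[of "-u" "-v" 2] by simp
        then show ?thesis unfolding power_mult_distrib ssu ssv using assms
          using mult_left_mono[of "u^2" "v^2" k] by (simp add: algebra_simps)
      qed
      then have "\<bar>u * sqrt (v^2+k)\<bar> \<le> \<bar>v * sqrt (u^2+k)\<bar>" by (simp add: abs_le_square_iff)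
      then show ?thesis using h su sv by (simp add: abs_mult)
    qed
  qed
  then show ?thesis using su sv by (simp add: divide_simps mult.commute)
qed

theorem lemma4:
  fixes x p :: "'a::euclidean_space" and \<delta> :: real
  assumes "norm x = 1" and "p \<noteq> 0" and "norm p \<ge> \<delta>"
    and "p + x \<noteq> 0"
    and "\<delta>^2 + 2 * \<delta> * ((p /\<^sub>R norm p) \<bullet> x) + 1 > 0"
  shows "norm (p /\<^sub>R norm p - (p + x) /\<^sub>R norm (p + x))
    \<le> sqrt (2 - 2 * ((\<delta> + (p /\<^sub>R norm p) \<bullet> x)
                   / sqrt (\<delta>^2 + 2 * \<delta> * ((p /\<^sub>R norm p) \<bullet> x) + 1)))"
proof -
  define q where "q = p /\<^sub>R norm p"
  define r where "r = norm p"
  define c where "c = q \<bullet> x"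
  have r0: "r > 0" using assms(2) r_def by simp
  have nq: "norm q = 1" using assms(2) by (simp add: q_def)
  have pq: "p = r *\<^sub>R q" using r0 by (simp add: q_def r_def)
  have qq: "q \<bullet> q = 1" using nq by (simp add: dot_square_norm)
  have xx: "x \<bullet> x = 1" using assms(1) by (simp add: dot_square_norm)
  have cb: "\<bar>c\<bar> \<le> 1" using Cauchy_Schwarz_ineq2[of q x] nq assms(1) by (simp add: c_def)
  have c2: "c^2 \<le> 1" using cb by (simp add: abs_square_le_1)
  define N where "N = norm (p + x)"
  have N0: "N > 0" using assms(4) N_def by simp
  have N2: "N^2 = r^2 + 2*r*c + 1"
    unfolding N_def power2_norm_eq_inner pq
    by (simp add: inner_add_left inner_add_right qq xx c_def inner_commute power2_eq_square algebra_simps)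
  have qy: "q \<bullet> ((p + x) /\<^sub>R N) = (r + c) / N"
    unfolding pq by (simp add: inner_add_right qq c_def divide_simps)
  have yy: "norm ((p + x) /\<^sub>R N) = 1" using N0 N_def by simp
  have d2: "(norm (q - (p + x) /\<^sub>R N))^2 = 2 - 2 * ((r + c) / N)"
  proof -
    have "(norm (q - (p + x) /\<^sub>R N))^2 = q \<bullet> q - 2 * (q \<bullet> ((p + x) /\<^sub>R N)) + (norm ((p + x) /\<^sub>R N))^2"
      unfolding power2_norm_eq_inner by (simp add: inner_diff_left inner_diff_right inner_commute)
    then show ?thesis using qq qy yy by simp
  qed
  have Nsq: "N = sqrt ((r + c)^2 + (1 - c^2))"
  proof -
    have "N = sqrt (N^2)" using N0 by simp
    also have "N^2 = (r + c)^2 + (1 - c^2)" using N2 by (simp add: power2_eq_square algebra_simps)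
    finally show ?thesis .
  qed
  have Dsq: "\<delta>^2 + 2*\<delta>*c + 1 = (\<delta> + c)^2 + (1 - c^2)" by (simp add: power2_eq_square algebra_simps)
  have mono: "(\<delta> + c) / sqrt ((\<delta> + c)^2 + (1 - c^2)) \<le> (r + c) / sqrt ((r + c)^2 + (1 - c^2))"
  proof (rule mono_aux)
    show "\<delta> + c \<le> r + c" using assms(3) r_def by simp
    show "0 \<le> 1 - c^2" using c2 by simp
    have "(r + c)^2 + (1 - c^2) = N^2" using N2 by (simp add: power2_eq_square algebra_simps)
    then show "0 < (r + c)^2 + (1 - c^2)" using N0 by simp
    have "\<delta>^2 + 2*\<delta>*c + 1 > 0" using assms(5) unfolding c_def q_def .
    then show "0 < (\<delta> + c)^2 + (1 - c^2)" using Dsq by simp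
  qed
  have "norm (q - (p + x) /\<^sub>R N) = sqrt (2 - 2 * ((r + c) / N))"
    using d2 by (metis norm_ge_zero real_sqrt_unique)
  also have "\<dots> \<le> sqrt (2 - 2 * ((\<delta> + c) / sqrt (\<delta>^2 + 2*\<delta>*c + 1)))"
    apply (rule real_sqrt_le_mono)
    using mono unfolding Nsq Dsq by linarith
  finally show ?thesis by (simp add: q_def c_def N_def)
qed

end
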